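(* If $(\mathcal{C},P)$ is a heaco, then for every object $A$ the poset $P(A)^{op}$ is a Heyting algebra; in particular every $P(A)$ has finite joins.
   Context: A doctrine is a pair $(\mathcal{C},P)$, $\mathcal{C}$ a category with finite products, $P:\mathcal{C}^{op}\to\mathbf{Pos}$ a functor, $f^*=P(f)$; primary: each $P(A)$ has binary meets preserved by each $f^*$. Elementary: primary and for every $A$ there is $\delta_A\in P(A\times A)$ such that for every $X$ the assignment $\psi\mapsto\langle\pi_1,\pi_2\rangle^*\psi\wedge\langle\pi_2,\pi_3\rangle^*\delta_A$ is a left adjoint $P(X\times A)\to P(X\times A\times A)$ to $(id_X\times\Delta_A)^*$. Graph of $f:X\to A$: $\mathcal{G}(f)=(f\times id_A)^*\delta_A$. Stable initial object: initial $0$ with $X\times0\cong0$ for all $X$. AC: for every $A$ not stable initial and every $\Gamma$, $\pi_\Gamma^*$ ($\pi_\Gamma:\Gamma\times A\to\Gamma$) has a left adjoint $\Sigma_{\pi_\Gamma}$ and each $\psi\in P(\Gamma\times A)$ has a chosen $\epsilon_\psi:\Gamma\to A$ with $\Sigma_{\pi_\Gamma}\psi=\langle id_\Gamma,\epsilon_\psi\rangle^*\psi$ (also with factors swapped). Co-comprehension: each $P(A)$ has a bottom and each $\alpha$ has $\lceil\alpha\rceil:\{\alpha\}^o\to A$ with $\lceil\alpha\rceil^*\alpha=\bot$, universal among $f$ with $f^*\alpha=\bot$; full if $\lceil\beta\rceil$ factoring through $\lceil\alpha\rceil$ implies $\alpha\le\beta$. An eaco is an elementary doctrine with full co-comprehension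 satisfying AC such that for every $f:X\to A$, $\alpha\in P(A)$: $f^*\langle\epsilon_{\mathcal{G}(\lceil\alpha\rceil)},id_A\rangle^*\mathcal{G}(\lceil\alpha\rceil)=\langle\epsilon_{\mathcal{G}(\lceil f^*\alpha\rceil)},id_X\rangle^*\mathcal{G}(\lceil f^*\alpha\rceil)$. Higher order: for every $A$ there are $\mathbb{P}(A)$ and $\in_A\in P(A\times\mathbb{P}(A))$ such that every $\phi\in P(A\times Y)$ equals $(id_A\times\chi_\phi)^*\in_A$ for some $\chi_\phi:Y\to\mathbb{P}(A)$. A heaco is a higher order eaco. *)

theory Defs
  imports Main
begin

definition po_on :: "'p set \<Rightarrow> ('p \<Rightarrow> 'p \<Rightarrow> bool) \<Rightarrow> bool" where
  "po_on S r \<longleftrightarrow> (\<forall>x\<in>S. r x x) \<and> (\<forall>x\<in>S. \<forall>y\<in>S. r x y \<and> r y x \<longrightarrow> x = y)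
     \<and> (\<forall>x\<in>S. \<forall>y\<in>S. \<forall>z\<in>S. r x y \<and> r y z \<longrightarrow> r x z)"

definition po_glb :: "'p set \<Rightarrow> ('p \<Rightarrow> 'p \<Rightarrow> bool) \<Rightarrow> 'p \<Rightarrow> 'p \<Rightarrow> 'p \<Rightarrow> bool" where
  "po_glb S r x y z \<longleftrightarrow> z \<in> S \<and> r z x \<and> r z y \<and> (\<forall>w\<in>S. r w x \<and> r w y \<longrightarrow> r w z)"

definition po_lub :: "'p set \<Rightarrow> ('p \<Rightarrow> 'p \<Rightarrow> bool) \<Rightarrow> 'p \<Rightarrow> 'p \<Rightarrow> 'p \<Rightarrow> bool" where
  "po_lub S r x y z \<longleftrightarrow> po_glb S (\<lambda>a b. r b a) x y z"

definition po_top :: "'p set \<Rightarrow> ('p \<Rightarrow> 'p \<Rightarrow> bool) \<Rightarrow> 'p \<Rightarrow> bool" where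
  "po_top S r t \<longleftrightarrow> t \<in> S \<and> (\<forall>x\<in>S. r x t)"

definition po_bot :: "'p set \<Rightarrow> ('p \<Rightarrow> 'p \<Rightarrow> bool) \<Rightarrow> 'p \<Rightarrow> bool" where
  "po_bot S r b \<longleftrightarrow> b \<in> S \<and> (\<forall>x\<in>S. r b x)"

definition heyting_algebra :: "'p set \<Rightarrow> ('p \<Rightarrow> 'p \<Rightarrow> bool) \<Rightarrow> bool" where
  "heyting_algebra S r \<longleftrightarrow> po_on S r
     \<and> (\<exists>t. po_top S r t) \<and> (\<exists>b. po_bot S r b)
     \<and> (\<forall>x\<in>S. \<forall>y\<in>S. \<exists>z. po_glb S r x y z)
     \<and> (\<forall>x\<in>S. \<forall>y\<in>S. \<exists>z. po_lub S r x y z)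
     \<and> (\<forall>x\<in>S. \<forall>y\<in>S. \<exists>z\<in>S. \<forall>w\<in>S.
           (\<forall>m. po_glb S r w x m \<longrightarrow> r m y) \<longleftrightarrow> r w z)"

definition has_finite_joins :: "'p set \<Rightarrow> ('p \<Rightarrow> 'p \<Rightarrow> bool) \<Rightarrow> bool" where
  "has_finite_joins S r \<longleftrightarrow> (\<exists>b. po_bot S r b) \<and> (\<forall>x\<in>S. \<forall>y\<in>S. \<exists>z. po_lub S r x y z)"

record ('o, 'm) fpcat =
  Ar :: "'m set"
  c_dom :: "'m \<Rightarrow> 'o"
  c_cod :: "'m \<Rightarrow> 'o"
  cmp :: "'m \<Rightarrow> 'm \<Rightarrow> 'm"      (* cmp C g f = g \<circ> f *)
  idn :: "'o \<Rightarrow> 'm"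
  trm :: "'o"
  trm_ar :: "'o \<Rightarrow> 'm"
  prd :: "'o \<Rightarrow> 'o \<Rightarrow> 'o"
  pr1 :: "'o \<Rightarrow> 'o \<Rightarrow> 'm"
  pr2 :: "'o \<Rightarrow> 'o \<Rightarrow> 'm"
  pair :: "'m \<Rightarrow> 'm \<Rightarrow> 'm"

definition hom :: "('o, 'm, 'z) fpcat_scheme \<Rightarrow> 'o \<Rightarrow> 'o \<Rightarrow> 'm set" where
  "hom C X Y = {f \<in> Ar C. c_dom C f = X \<and> c_cod C f = Y}"

definition is_fpcat :: "('o, 'm, 'z) fpcat_scheme \<Rightarrow> bool" where
  "is_fpcat C \<longleftrightarrow>
     (\<forall>X. idn C X \<in> hom C X X)
   \<and> (\<forall>f\<in>Ar C. \<forall>g\<in>Ar C. c_cod C f = c_dom C g \<longrightarrow>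
        cmp C g f \<in> hom C (c_dom C f) (c_cod C g))
   \<and> (\<forall>f\<in>Ar C. \<forall>g\<in>Ar C. \<forall>h\<in>Ar C. c_cod C f = c_dom C g \<and> c_cod C g = c_dom C h \<longrightarrow>
        cmp C h (cmp C g f) = cmp C (cmp C h g) f)
   \<and> (\<forall>f\<in>Ar C. cmp C f (idn C (c_dom C f)) = f \<and> cmp C (idn C (c_cod C f)) f = f)
   \<and> (\<forall>X. trm_ar C X \<in> hom C X (trm C) \<and> (\<forall>h\<in>hom C X (trm C). h = trm_ar C X))
   \<and> (\<forall>A B. pr1 C A B \<in> hom C (prd C A B) A \<and> pr2 C A B \<in> hom C (prd C A B) B)
   \<and> (\<forall>Z A B f g. f \<in> hom C Z A \<and> g \<in> hom C Z B \<longrightarrow>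
        pair C f g \<in> hom C Z (prd C A B)
        \<and> cmp C (pr1 C A B) (pair C f g) = f \<and> cmp C (pr2 C A B) (pair C f g) = g)
   \<and> (\<forall>Z A B h. h \<in> hom C Z (prd C A B) \<longrightarrow>
        h = pair C (cmp C (pr1 C A B) h) (cmp C (pr2 C A B) h))"

definition c_iso :: "('o, 'm, 'z) fpcat_scheme \<Rightarrow> 'o \<Rightarrow> 'o \<Rightarrow> bool" where
  "c_iso C X Y \<longleftrightarrow> (\<exists>f g. f \<in> hom C X Y \<and> g \<in> hom C Y X
      \<and> cmp C g f = idn C X \<and> cmp C f g = idn C Y)"

definition c_initial :: "('o, 'm, 'z) fpcat_scheme \<Rightarrow> 'o \<Rightarrow> bool" where
  "c_initial C Z \<longleftrightarrow> (\<forall>X. \<exists>!h. h \<in> hom C Z X)"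

definition stable_initial :: "('o, 'm, 'z) fpcat_scheme \<Rightarrow> 'o \<Rightarrow> bool" where
  "stable_initial C Z \<longleftrightarrow> c_initial C Z \<and> (\<forall>X. c_iso C (prd C X Z) Z)"

record ('o, 'm, 'p) doctrine = "('o, 'm) fpcat" +
  Pr :: "'o \<Rightarrow> 'p set"                 (* underlying set of P(A) *)
  leq :: "'o \<Rightarrow> 'p \<Rightarrow> 'p \<Rightarrow> bool"
  rdx :: "'m \<Rightarrow> 'p \<Rightarrow> 'p"             (* f^* = P(f) *)

definition is_doctrine :: "('o, 'm, 'p, 'z) doctrine_scheme \<Rightarrow> bool" where
  "is_doctrine D \<longleftrightarrow> is_fpcat D
   \<and> (\<forall>A. po_on (Pr D A) (leq D A))
   \<and> (\<forall>f\<in>Ar D. \<forall>a\<in>Pr D (c_cod D f). rdx D f a \<in> Pr D (c_dom D f))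
   \<and> (\<forall>f\<in>Ar D. \<forall>a\<in>Pr D (c_cod D f). \<forall>b\<in>Pr D (c_cod D f).
        leq D (c_cod D f) a b \<longrightarrow> leq D (c_dom D f) (rdx D f a) (rdx D f b))
   \<and> (\<forall>X. \<forall>a\<in>Pr D X. rdx D (idn D X) a = a)
   \<and> (\<forall>f\<in>Ar D. \<forall>g\<in>Ar D. c_cod D f = c_dom D g \<longrightarrow>
        (\<forall>a\<in>Pr D (c_cod D g). rdx D (cmp D g f) a = rdx D f (rdx D g a)))"

definition meetP :: "('o, 'm, 'p, 'z) doctrine_scheme \<Rightarrow> 'o \<Rightarrow> 'p \<Rightarrow> 'p \<Rightarrow> 'p" where
  "meetP D A x y = (THE z. po_glb (Pr D A) (leq D A) x y z)"

definition botP :: "('o, 'm, 'p, 'z) doctrine_scheme \<Rightarrow> 'o \<Rightarrow> 'p" where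
  "botP D A = (THE b. po_bot (Pr D A) (leq D A) b)"

definition is_primary :: "('o, 'm, 'p, 'z) doctrine_scheme \<Rightarrow> bool" where
  "is_primary D \<longleftrightarrow> is_doctrine D
   \<and> (\<forall>A. \<forall>x\<in>Pr D A. \<forall>y\<in>Pr D A. \<exists>z. po_glb (Pr D A) (leq D A) x y z)
   \<and> (\<forall>f\<in>Ar D. \<forall>x\<in>Pr D (c_cod D f). \<forall>y\<in>Pr D (c_cod D f).
        rdx D f (meetP D (c_cod D f) x y) = meetP D (c_dom D f) (rdx D f x) (rdx D f y))"

text \<open>Elementary doctrine; X \<times> A \<times> A is bracketed as (X \<times> A) \<times> A.
  Then \<langle>\<pi>1,\<pi>2\<rangle> is the first projection of (X\<times>A)\<times>A, \<langle>\<pi>2,\<pi>3\<rangle> = \<langle>pr2\<circ>pr1, pr2\<rangle>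
  and id_X \<times> \<Delta>_A = \<langle>id_{X\<times>A}, pr2\<rangle>.\<close>
definition is_elementary :: "('o, 'm, 'p, 'z) doctrine_scheme \<Rightarrow> ('o \<Rightarrow> 'p) \<Rightarrow> bool" where
  "is_elementary D \<delta> \<longleftrightarrow> is_primary D
   \<and> (\<forall>A. \<delta> A \<in> Pr D (prd D A A))
   \<and> (\<forall>A X.
       (let XA = prd D X A; XAA = prd D XA A;
            p12 = pr1 D XA A;
            p23 = pair D (cmp D (pr2 D X A) (pr1 D XA A)) (pr2 D XA A);
            d = pair D (idn D XA) (pr2 D X A)
        in \<forall>\<psi>\<in>Pr D XA. \<forall>\<phi>\<in>Pr D XAA.
             leq D XAA (meetP D XAA (rdx D p12 \<psi>) (rdx D p23 (\<delta> A))) \<phi>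
             \<longleftrightarrow> leq D XA \<psi> (rdx D d \<phi>)))"

definition grph :: "('o, 'm, 'p, 'z) doctrine_scheme \<Rightarrow> ('o \<Rightarrow> 'p) \<Rightarrow> 'm \<Rightarrow> 'p" where
  "grph D \<delta> f = rdx D (pair D (cmp D f (pr1 D (c_dom D f) (c_cod D f))) (pr2 D (c_dom D f) (c_cod D f)))
                   (\<delta> (c_cod D f))"

text \<open>AC. eps1 \<Gamma> A \<psi> is the chosen witness for \<psi> \<in> P(\<Gamma> \<times> A), eps2 A \<Gamma> \<psi> the
  chosen witness for \<psi> \<in> P(A \<times> \<Gamma>) (factors swapped). The left adjoint condition is
  stated pointwise: \<Sigma>\<psi> = \<langle>id,\<epsilon>_\<psi>\<rangle>^*\<psi> is left adjoint to \<pi>_\<Gamma>^*.\<close>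
definition has_AC :: "('o, 'm, 'p, 'z) doctrine_scheme \<Rightarrow> ('o \<Rightarrow> 'o \<Rightarrow> 'p \<Rightarrow> 'm)
                       \<Rightarrow> ('o \<Rightarrow> 'o \<Rightarrow> 'p \<Rightarrow> 'm) \<Rightarrow> bool" where
  "has_AC D eps1 eps2 \<longleftrightarrow> (\<forall>A \<Gamma>. \<not> stable_initial D A \<longrightarrow>
     (\<forall>\<psi>\<in>Pr D (prd D \<Gamma> A). eps1 \<Gamma> A \<psi> \<in> hom D \<Gamma> A
        \<and> (\<forall>\<phi>\<in>Pr D \<Gamma>. leq D \<Gamma> (rdx D (pair D (idn D \<Gamma>) (eps1 \<Gamma> A \<psi>)) \<psi>) \<phi>
                         \<longleftrightarrow> leq D (prd D \<Gamma> A) \<psi> (rdx D (pr1 D \<Gamma> A) \<phi>)))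
   \<and> (\<forall>\<psi>\<in>Pr D (prd D A \<Gamma>). eps2 A \<Gamma> \<psi> \<in> hom D \<Gamma> A
        \<and> (\<forall>\<phi>\<in>Pr D \<Gamma>. leq D \<Gamma> (rdx D (pair D (eps2 A \<Gamma> \<psi>) (idn D \<Gamma>)) \<psi>) \<phi>
                         \<longleftrightarrow> leq D (prd D A \<Gamma>) \<psi> (rdx D (pr2 D A \<Gamma>) \<phi>))))"

text \<open>Co-comprehension: cc A \<alpha> is the chosen arrow \<lceil>\<alpha>\<rceil> : {\<alpha>}^o \<rightarrow> A.\<close>
definition has_cocomp :: "('o, 'm, 'p, 'z) doctrine_scheme \<Rightarrow> ('o \<Rightarrow> 'p \<Rightarrow> 'm) \<Rightarrow> bool" where
  "has_cocomp D cc \<longleftrightarrow> (\<forall>A. \<exists>b. po_bot (Pr D A) (leq D A) b)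
   \<and> (\<forall>A. \<forall>\<alpha>\<in>Pr D A. cc A \<alpha> \<in> Ar D \<and> c_cod D (cc A \<alpha>) = A
        \<and> rdx D (cc A \<alpha>) \<alpha> = botP D (c_dom D (cc A \<alpha>))
        \<and> (\<forall>Y f. f \<in> hom D Y A \<and> rdx D f \<alpha> = botP D Y \<longrightarrow>
              (\<exists>!g. g \<in> hom D Y (c_dom D (cc A \<alpha>)) \<and> cmp D (cc A \<alpha>) g = f)))"

definition cocomp_full :: "('o, 'm, 'p, 'z) doctrine_scheme \<Rightarrow> ('o \<Rightarrow> 'p \<Rightarrow> 'm) \<Rightarrow> bool" where
  "cocomp_full D cc \<longleftrightarrow> (\<forall>A. \<forall>\<alpha>\<in>Pr D A. \<forall>\<beta>\<in>Pr D A.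
      (\<exists>g. g \<in> hom D (c_dom D (cc A \<beta>)) (c_dom D (cc A \<alpha>)) \<and> cmp D (cc A \<alpha>) g = cc A \<beta>)
      \<longrightarrow> leq D A \<alpha> \<beta>)"

text \<open>For \<alpha> \<in> P(A), \<G>(\<lceil>\<alpha>\<rceil>) \<in> P({\<alpha>}^o \<times> A) and
  \<epsilon>_{\<G>(\<lceil>\<alpha>\<rceil>)} : A \<rightarrow> {\<alpha>}^o is the (swapped-factor) AC witness; it is only
  provided by AC when {\<alpha>}^o is not stable initial, so the equation is required
  whenever both sides are defined.\<close>
definition eaco_cond :: "('o, 'm, 'p, 'z) doctrine_scheme \<Rightarrow> ('o \<Rightarrow> 'p)
                        \<Rightarrow> ('o \<Rightarrow> 'p \<Rightarrow> 'm) \<Rightarrow> ('o \<Rightarrow> 'o \<Rightarrow> 'p \<Rightarrow> 'm) \<Rightarrow> bool" where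
  "eaco_cond D \<delta> cc eps2 \<longleftrightarrow> (\<forall>f\<in>Ar D. \<forall>\<alpha>\<in>Pr D (c_cod D f).
     (let A = c_cod D f; X = c_dom D f;
          O1 = c_dom D (cc A \<alpha>); G1 = grph D \<delta> (cc A \<alpha>);
          \<beta> = rdx D f \<alpha>;
          O2 = c_dom D (cc X \<beta>); G2 = grph D \<delta> (cc X \<beta>)
      in \<not> stable_initial D O1 \<and> \<not> stable_initial D O2 \<longrightarrow>
         rdx D f (rdx D (pair D (eps2 O1 A G1) (idn D A)) G1)
         = rdx D (pair D (eps2 O2 X G2) (idn D X)) G2))"

definition higher_order :: "('o, 'm, 'p, 'z) doctrine_scheme \<Rightarrow> bool" where
  "higher_order D \<longleftrightarrow> (\<forall>A. \<exists>PA. \<exists>mem\<in>Pr D (prd D A PA).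
     \<forall>Y. \<forall>\<phi>\<in>Pr D (prd D A Y). \<exists>\<chi>\<in>hom D Y PA.
        \<phi> = rdx D (pair D (pr1 D A Y) (cmp D \<chi> (pr2 D A Y))) mem)"

definition is_heaco :: "('o, 'm, 'p, 'z) doctrine_scheme \<Rightarrow> ('o \<Rightarrow> 'p) \<Rightarrow> ('o \<Rightarrow> 'p \<Rightarrow> 'm)
                        \<Rightarrow> ('o \<Rightarrow> 'o \<Rightarrow> 'p \<Rightarrow> 'm) \<Rightarrow> ('o \<Rightarrow> 'o \<Rightarrow> 'p \<Rightarrow> 'm) \<Rightarrow> bool" where
  "is_heaco D \<delta> cc eps1 eps2 \<longleftrightarrow> is_elementary D \<delta> \<and> has_cocomp D cc \<and> cocomp_full D cc
     \<and> has_AC D eps1 eps2 \<and> eaco_cond D \<delta> cc eps2 \<and> higher_order D"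

end

theory Submission
  imports Defs
begin

locale hctx =
  fixes D :: "('o, 'm, 'p) doctrine"
    and \<delta> :: "'o \<Rightarrow> 'p" and cc :: "'o \<Rightarrow> 'p \<Rightarrow> 'm"
    and eps1 eps2 :: "'o \<Rightarrow> 'o \<Rightarrow> 'p \<Rightarrow> 'm"
  assumes H: "is_heaco D \<delta> cc eps1 eps2"
begin

lemma elem: "is_elementary D \<delta>" using H unfolding is_heaco_def by blast
lemma prim: "is_primary D" using elem unfolding is_elementary_def by blast
lemma doct: "is_doctrine D" using prim unfolding is_primary_def by blast
lemma fpc: "is_fpcat D" using doct unfolding is_doctrine_def by blast

lemma idn_hom: "idn D X \<in> hom D X X" using fpc unfolding is_fpcat_def by blast
lemma homD: "f \<in> hom D X Y \<Longrightarrow> f \<in> Ar D \<and> c_dom D f = X \<and> c_cod D f = Y"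
  unfolding hom_def by blast
lemma homI: "f \<in> Ar D \<Longrightarrow> c_dom D f = X \<Longrightarrow> c_cod D f = Y \<Longrightarrow> f \<in> hom D X Y"
  unfolding hom_def by blast
lemma comp_hom: "f \<in> hom D X Y \<Longrightarrow> g \<in> hom D Y Z \<Longrightarrow> cmp D g f \<in> hom D X Z"
  using fpc unfolding is_fpcat_def hom_def by auto
lemma assoc: "f \<in> hom D X Y \<Longrightarrow> g \<in> hom D Y Z \<Longrightarrow> h \<in> hom D Z W \<Longrightarrow>
   cmp D h (cmp D g f) = cmp D (cmp D h g) f"
  using fpc unfolding is_fpcat_def hom_def by auto
lemma idr: "f \<in> hom D X Y \<Longrightarrow> cmp D f (idn D X) = f"
  using fpc unfolding is_fpcat_def hom_def by auto
lemma idl: "f \<in> hom D X Y \<Longrightarrow> cmp D (idn D Y) f = f"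
  using fpc unfolding is_fpcat_def hom_def by auto
lemma pr1_hom: "pr1 D A B \<in> hom D (prd D A B) A" using fpc unfolding is_fpcat_def by blast
lemma pr2_hom: "pr2 D A B \<in> hom D (prd D A B) B" using fpc unfolding is_fpcat_def by blast
lemma pair_hom: "f \<in> hom D Z A \<Longrightarrow> g \<in> hom D Z B \<Longrightarrow> pair D f g \<in> hom D Z (prd D A B)"
  using fpc unfolding is_fpcat_def by blast
lemma pr1_pair: "f \<in> hom D Z A \<Longrightarrow> g \<in> hom D Z B \<Longrightarrow> cmp D (pr1 D A B) (pair D f g) = f"
  using fpc unfolding is_fpcat_def by blast
lemma pr2_pair: "f \<in> hom D Z A \<Longrightarrow> g \<in> hom D Z B \<Longrightarrow> cmp D (pr2 D A B) (pair D f g) = g"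
  using fpc unfolding is_fpcat_def by blast
lemma eta: "h \<in> hom D Z (prd D A B) \<Longrightarrow> h = pair D (cmp D (pr1 D A B) h) (cmp D (pr2 D A B) h)"
  using fpc unfolding is_fpcat_def by blast

lemma pair_comp:
  assumes "f \<in> hom D Z A" "g \<in> hom D Z B" "h \<in> hom D W Z"
  shows "cmp D (pair D f g) h = pair D (cmp D f h) (cmp D g h)"
proof -
  have ph: "pair D f g \<in> hom D Z (prd D A B)" using assms pair_hom by blast
  have c: "cmp D (pair D f g) h \<in> hom D W (prd D A B)" using comp_hom[OF assms(3) ph] .
  have "cmp D (pr1 D A B) (cmp D (pair D f g) h) = cmp D f h"
    using assoc[OF assms(3) ph pr1_hom] pr1_pair[OF assms(1,2)] by simp
  moreover have "cmp D (pr2 D A B) (cmp D (pair D f g) h) = cmp D g h"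
    using assoc[OF assms(3) ph pr2_hom] pr2_pair[OF assms(1,2)] by simp
  ultimately show ?thesis using eta[OF c] by simp
qed

lemma pair_proj: "pair D (pr1 D A B) (pr2 D A B) = idn D (prd D A B)"
  using eta[OF idn_hom, of A B] idr[OF pr1_hom] idr[OF pr2_hom] by simp

lemma po: "po_on (Pr D A) (leq D A)" using doct unfolding is_doctrine_def by blast
lemma refl: "x \<in> Pr D A \<Longrightarrow> leq D A x x" using po unfolding po_on_def by blast
lemma antisym: "x \<in> Pr D A \<Longrightarrow> y \<in> Pr D A \<Longrightarrow> leq D A x y \<Longrightarrow> leq D A y x \<Longrightarrow> x = y"
  using po unfolding po_on_def by blast
lemma trans: "x \<in> Pr D A \<Longrightarrow> y \<in> Pr D A \<Longrightarrow> z \<in> Pr D A \<Longrightarrow> leq D A x y \<Longrightarrow> leq D A y z \<Longrightarrow> leq D A x z"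
  using po unfolding po_on_def by blast
lemma rdx_in: "f \<in> hom D X Y \<Longrightarrow> a \<in> Pr D Y \<Longrightarrow> rdx D f a \<in> Pr D X"
  using doct unfolding is_doctrine_def hom_def by blast
lemma rdx_mono: "f \<in> hom D X Y \<Longrightarrow> a \<in> Pr D Y \<Longrightarrow> b \<in> Pr D Y \<Longrightarrow> leq D Y a b \<Longrightarrow>
   leq D X (rdx D f a) (rdx D f b)"
  using doct unfolding is_doctrine_def hom_def by blast
lemma rdx_id: "a \<in> Pr D X \<Longrightarrow> rdx D (idn D X) a = a"
  using doct unfolding is_doctrine_def by blast
lemma rdx_comp: "f \<in> hom D X Y \<Longrightarrow> g \<in> hom D Y Z \<Longrightarrow> a \<in> Pr D Z \<Longrightarrow>
   rdx D (cmp D g f) a = rdx D f (rdx D g a)"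
  using doct unfolding is_doctrine_def hom_def by auto

lemma glb_ex: "x \<in> Pr D A \<Longrightarrow> y \<in> Pr D A \<Longrightarrow> \<exists>z. po_glb (Pr D A) (leq D A) x y z"
  using prim unfolding is_primary_def by blast
lemma glb_unique: "po_glb (Pr D A) (leq D A) x y z \<Longrightarrow> po_glb (Pr D A) (leq D A) x y z' \<Longrightarrow> z = z'"
  unfolding po_glb_def using antisym by blast
lemma meet_glb: "x \<in> Pr D A \<Longrightarrow> y \<in> Pr D A \<Longrightarrow> po_glb (Pr D A) (leq D A) x y (meetP D A x y)"
  unfolding meetP_def using glb_ex glb_unique by (metis theI)
lemma meet_in: "x \<in> Pr D A \<Longrightarrow> y \<in> Pr D A \<Longrightarrow> meetP D A x y \<in> Pr D A"
  using meet_glb unfolding po_glb_def by blast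
lemma meet_le1: "x \<in> Pr D A \<Longrightarrow> y \<in> Pr D A \<Longrightarrow> leq D A (meetP D A x y) x"
  using meet_glb unfolding po_glb_def by blast
lemma meet_le2: "x \<in> Pr D A \<Longrightarrow> y \<in> Pr D A \<Longrightarrow> leq D A (meetP D A x y) y"
  using meet_glb unfolding po_glb_def by blast
lemma meet_gr: "x \<in> Pr D A \<Longrightarrow> y \<in> Pr D A \<Longrightarrow> w \<in> Pr D A \<Longrightarrow> leq D A w x \<Longrightarrow> leq D A w y \<Longrightarrow>
   leq D A w (meetP D A x y)"
  using meet_glb unfolding po_glb_def by blast
lemma rdx_meet: "f \<in> hom D X Y \<Longrightarrow> x \<in> Pr D Y \<Longrightarrow> y \<in> Pr D Y \<Longrightarrow>
   rdx D f (meetP D Y x y) = meetP D X (rdx D f x) (rdx D f y)"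
  using prim unfolding is_primary_def hom_def by blast

lemma cocomp: "has_cocomp D cc" using H unfolding is_heaco_def by blast
lemma full: "cocomp_full D cc" using H unfolding is_heaco_def by blast
lemma AC: "has_AC D eps1 eps2" using H unfolding is_heaco_def by blast

lemma bot_glb: "po_bot (Pr D A) (leq D A) (botP D A)"
proof -
  obtain b where b: "po_bot (Pr D A) (leq D A) b" using cocomp unfolding has_cocomp_def by blast
  have "\<And>b'. po_bot (Pr D A) (leq D A) b' \<Longrightarrow> b' = b" using b antisym unfolding po_bot_def by blast
  then show ?thesis unfolding botP_def using b by (metis theI)
qed
lemma bot_in: "botP D A \<in> Pr D A" using bot_glb unfolding po_bot_def by blast
lemma bot_le: "x \<in> Pr D A \<Longrightarrow> leq D A (botP D A) x" using bot_glb unfolding po_bot_def by blast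

lemma delta_in: "\<delta> A \<in> Pr D (prd D A A)" using elem unfolding is_elementary_def by blast

lemma elem_adj:
  assumes "\<psi> \<in> Pr D (prd D X A)" "\<Phi> \<in> Pr D (prd D (prd D X A) A)"
  shows "leq D (prd D (prd D X A) A)
           (meetP D (prd D (prd D X A) A) (rdx D (pr1 D (prd D X A) A) \<psi>)
              (rdx D (pair D (cmp D (pr2 D X A) (pr1 D (prd D X A) A)) (pr2 D (prd D X A) A)) (\<delta> A))) \<Phi>
         \<longleftrightarrow> leq D (prd D X A) \<psi> (rdx D (pair D (idn D (prd D X A)) (pr2 D X A)) \<Phi>)"
  using elem assms unfolding is_elementary_def Let_def by blast

lemma c2: "f \<in> hom D X Y \<Longrightarrow> g \<in> hom D Y Z \<Longrightarrow> h \<in> hom D Z W \<Longrightarrow>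
   cmp D (cmp D h g) f = cmp D h (cmp D g f)" using assoc by simp

lemma transport:
  assumes th: "\<theta> \<in> Pr D (prd D X A)" and u: "u \<in> hom D Z X" and v: "v \<in> hom D Z A"
    and w: "w \<in> hom D Z A"
  shows "leq D Z (meetP D Z (rdx D (pair D u v) \<theta>) (rdx D (pair D v w) (\<delta> A))) (rdx D (pair D u w) \<theta>)"
proof -
  define XA where "XA = prd D X A"
  define XAA where "XAA = prd D XA A"
  define p12 where "p12 = pr1 D XA A"
  define p23 where "p23 = pair D (cmp D (pr2 D X A) (pr1 D XA A)) (pr2 D XA A)"
  define d where "d = pair D (idn D XA) (pr2 D X A)"
  define q where "q = pair D (cmp D (pr1 D X A) (pr1 D XA A)) (pr2 D XA A)"
  define h where "h = pair D (pair D u v) w"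
  have p1: "pr1 D X A \<in> hom D XA X" "pr2 D X A \<in> hom D XA A" unfolding XA_def by (rule pr1_hom, rule pr2_hom)
  have p1': "pr1 D XA A \<in> hom D XAA XA" "pr2 D XA A \<in> hom D XAA A" unfolding XAA_def by (rule pr1_hom, rule pr2_hom)
  have p12h: "p12 \<in> hom D XAA XA" unfolding p12_def using p1' by simp
  have p23h: "p23 \<in> hom D XAA (prd D A A)" unfolding p23_def using p1 p1' by (blast intro: pair_hom comp_hom)
  have dh: "d \<in> hom D XA XAA" unfolding d_def XAA_def using p1 by (blast intro: pair_hom idn_hom)
  have qh: "q \<in> hom D XAA XA" unfolding q_def XA_def using p1 p1' by (metis XA_def pair_hom comp_hom)
  have uv: "pair D u v \<in> hom D Z XA" unfolding XA_def using u v by (rule pair_hom)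
  have hh: "h \<in> hom D Z XAA" unfolding h_def XAA_def using uv w by (rule pair_hom)
  have uw: "pair D u w \<in> hom D Z XA" unfolding XA_def using u w by (rule pair_hom)
  have vw: "pair D v w \<in> hom D Z (prd D A A)" using v w by (rule pair_hom)
  have thA: "\<theta> \<in> Pr D XA" using th unfolding XA_def .
  have qd: "cmp D q d = idn D XA"
  proof -
    have "cmp D q d = pair D (cmp D (cmp D (pr1 D X A) (pr1 D XA A)) d) (cmp D (pr2 D XA A) d)"
      unfolding q_def using pair_comp[OF comp_hom[OF p1'(1) p1(1)] p1'(2) dh] .
    also have "cmp D (cmp D (pr1 D X A) (pr1 D XA A)) d = pr1 D X A"
      using c2[OF dh p1'(1) p1(1)] pr1_pair[OF idn_hom p1(2)] idr[OF p1(1)]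
      unfolding d_def XAA_def by simp
    also have "cmp D (pr2 D XA A) d = pr2 D X A"
      using pr2_pair[OF idn_hom p1(2)] unfolding d_def XAA_def by simp
    finally show ?thesis using pair_proj unfolding XA_def by simp
  qed
  define \<Phi> where "\<Phi> = rdx D q \<theta>"
  have Phi: "\<Phi> \<in> Pr D XAA" unfolding \<Phi>_def using rdx_in[OF qh thA] .
  have dPhi: "rdx D d \<Phi> = \<theta>" unfolding \<Phi>_def using rdx_comp[OF dh qh thA] qd rdx_id[OF thA] by simp
  have M: "leq D XAA (meetP D XAA (rdx D p12 \<theta>) (rdx D p23 (\<delta> A))) \<Phi>"
    using elem_adj[of \<theta> X A \<Phi>] thA Phi dPhi refl[OF thA]
    unfolding XAA_def XA_def p12_def p23_def d_def by simp
  have inM: "meetP D XAA (rdx D p12 \<theta>) (rdx D p23 (\<delta> A)) \<in> Pr D XAA"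
    by (rule meet_in, rule rdx_in[OF p12h thA], rule rdx_in[OF p23h delta_in])
  have hM: "leq D Z (rdx D h (meetP D XAA (rdx D p12 \<theta>) (rdx D p23 (\<delta> A)))) (rdx D h \<Phi>)"
    using rdx_mono[OF hh inM Phi M] .
  have e1: "cmp D p12 h = pair D u v" unfolding p12_def h_def using pr1_pair[OF uv w] .
  have e2: "cmp D p23 h = pair D v w"
  proof -
    have "cmp D p23 h = pair D (cmp D (cmp D (pr2 D X A) (pr1 D XA A)) h) (cmp D (pr2 D XA A) h)"
      unfolding p23_def using pair_comp[OF comp_hom[OF p1'(1) p1(2)] p1'(2) hh] .
    also have "cmp D (cmp D (pr2 D X A) (pr1 D XA A)) h = v"
      using c2[OF hh p1'(1) p1(2)] pr1_pair[OF uv w] pr2_pair[OF u v] unfolding h_def XA_def by simp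
    also have "cmp D (pr2 D XA A) h = w" using pr2_pair[OF uv w] unfolding h_def .
    finally show ?thesis .
  qed
  have e3: "cmp D q h = pair D u w"
  proof -
    have "cmp D q h = pair D (cmp D (cmp D (pr1 D X A) (pr1 D XA A)) h) (cmp D (pr2 D XA A) h)"
      unfolding q_def using pair_comp[OF comp_hom[OF p1'(1) p1(1)] p1'(2) hh] .
    also have "cmp D (cmp D (pr1 D X A) (pr1 D XA A)) h = u"
      using c2[OF hh p1'(1) p1(1)] pr1_pair[OF uv w] pr1_pair[OF u v] unfolding h_def XA_def by simp
    also have "cmp D (pr2 D XA A) h = w" using pr2_pair[OF uv w] unfolding h_def .
    finally show ?thesis .
  qed
  have "rdx D h (meetP D XAA (rdx D p12 \<theta>) (rdx D p23 (\<delta> A)))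
        = meetP D Z (rdx D (pair D u v) \<theta>) (rdx D (pair D v w) (\<delta> A))"
    using rdx_meet[OF hh rdx_in[OF p12h thA] rdx_in[OF p23h delta_in]]
      rdx_comp[OF hh p12h thA] rdx_comp[OF hh p23h delta_in] e1 e2 by simp
  moreover have "rdx D h \<Phi> = rdx D (pair D u w) \<theta>"
    unfolding \<Phi>_def using rdx_comp[OF hh qh thA] e3 by simp
  ultimately show ?thesis using hM by simp
qed

lemma reflx:
  assumes f: "f \<in> hom D Z A" and x: "x \<in> Pr D Z"
  shows "leq D Z x (rdx D (pair D f f) (\<delta> A))"
proof -
  define XA where "XA = prd D Z A"
  define XAA where "XAA = prd D XA A"
  define p12 where "p12 = pr1 D XA A"
  define p23 where "p23 = pair D (cmp D (pr2 D Z A) (pr1 D XA A)) (pr2 D XA A)"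
  define d where "d = pair D (idn D XA) (pr2 D Z A)"
  have p1: "pr1 D Z A \<in> hom D XA Z" "pr2 D Z A \<in> hom D XA A" unfolding XA_def by (rule pr1_hom, rule pr2_hom)
  have p1': "pr1 D XA A \<in> hom D XAA XA" "pr2 D XA A \<in> hom D XAA A" unfolding XAA_def by (rule pr1_hom, rule pr2_hom)
  have p12h: "p12 \<in> hom D XAA XA" unfolding p12_def using p1' by simp
  have p23h: "p23 \<in> hom D XAA (prd D A A)" unfolding p23_def using p1 p1' by (blast intro: pair_hom comp_hom)
  have dh: "d \<in> hom D XA XAA" unfolding d_def XAA_def using p1 by (blast intro: pair_hom idn_hom)
  define \<psi> where "\<psi> = rdx D (pr1 D Z A) x"
  have psi: "\<psi> \<in> Pr D XA" unfolding \<psi>_def using rdx_in[OF p1(1) x] .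
  define \<Phi> where "\<Phi> = meetP D XAA (rdx D p12 \<psi>) (rdx D p23 (\<delta> A))"
  have Phi: "\<Phi> \<in> Pr D XAA" unfolding \<Phi>_def by (rule meet_in, rule rdx_in[OF p12h psi], rule rdx_in[OF p23h delta_in])
  have "leq D XA \<psi> (rdx D d \<Phi>)"
    using elem_adj[of \<psi> Z A \<Phi>] psi Phi refl[OF Phi]
    unfolding XAA_def XA_def p12_def p23_def d_def \<Phi>_def by simp
  moreover have "leq D XA (rdx D d \<Phi>) (rdx D d (rdx D p23 (\<delta> A)))"
    using rdx_mono[OF dh Phi rdx_in[OF p23h delta_in]] meet_le2[OF rdx_in[OF p12h psi] rdx_in[OF p23h delta_in]]
    unfolding \<Phi>_def by simp
  moreover have p23d: "cmp D p23 d = pair D (pr2 D Z A) (pr2 D Z A)"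
  proof -
    have "cmp D p23 d = pair D (cmp D (cmp D (pr2 D Z A) (pr1 D XA A)) d) (cmp D (pr2 D XA A) d)"
      unfolding p23_def using pair_comp[OF comp_hom[OF p1'(1) p1(2)] p1'(2) dh] .
    also have "cmp D (cmp D (pr2 D Z A) (pr1 D XA A)) d = pr2 D Z A"
      using c2[OF dh p1'(1) p1(2)] pr1_pair[OF idn_hom p1(2)] idr[OF p1(2)]
      unfolding d_def XAA_def by simp
    also have "cmp D (pr2 D XA A) d = pr2 D Z A"
      using pr2_pair[OF idn_hom p1(2)] unfolding d_def XAA_def by simp
    finally show ?thesis .
  qed
  ultimately have L: "leq D XA \<psi> (rdx D (pair D (pr2 D Z A) (pr2 D Z A)) (\<delta> A))"
    using trans[OF psi rdx_in[OF dh Phi] rdx_in[OF dh rdx_in[OF p23h delta_in]]]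
      rdx_comp[OF dh p23h delta_in] by simp
  define k where "k = pair D (idn D Z) f"
  have kh: "k \<in> hom D Z XA" unfolding k_def XA_def using idn_hom f by (rule pair_hom)
  have pp: "pair D (pr2 D Z A) (pr2 D Z A) \<in> hom D XA (prd D A A)" using p1(2) p1(2) by (rule pair_hom)
  have "leq D Z (rdx D k \<psi>) (rdx D k (rdx D (pair D (pr2 D Z A) (pr2 D Z A)) (\<delta> A)))"
    using rdx_mono[OF kh psi rdx_in[OF pp delta_in] L] .
  moreover have "rdx D k \<psi> = x"
    unfolding \<psi>_def using rdx_comp[OF kh p1(1) x] pr1_pair[OF idn_hom f] rdx_id[OF x]
    unfolding k_def by simp
  moreover have "cmp D (pair D (pr2 D Z A) (pr2 D Z A)) k = pair D f f"
    using pair_comp[OF p1(2) p1(2) kh] pr2_pair[OF idn_hom f] unfolding k_def by simp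
  ultimately show ?thesis using rdx_comp[OF kh pp delta_in] by simp
qed

definition istop where "istop X t \<longleftrightarrow> t \<in> Pr D X \<and> (\<forall>x\<in>Pr D X. leq D X x t)"

lemma istop_pair: "f \<in> hom D Z A \<Longrightarrow> istop Z (rdx D (pair D f f) (\<delta> A))"
  unfolding istop_def using reflx rdx_in pair_hom delta_in by blast

lemma top_stable:
  assumes t: "istop Y t" and g: "g \<in> hom D X Y"
  shows "istop X (rdx D g t)"
proof -
  have ii: "pair D (idn D Y) (idn D Y) \<in> hom D Y (prd D Y Y)" using idn_hom idn_hom by (rule pair_hom)
  have tin: "t \<in> Pr D Y" using t istop_def by blast
  have dl: "rdx D (pair D (idn D Y) (idn D Y)) (\<delta> Y) \<in> Pr D Y" using rdx_in[OF ii delta_in] .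
  have "leq D Y (rdx D (pair D (idn D Y) (idn D Y)) (\<delta> Y)) t" using t dl unfolding istop_def by blast
  then have 1: "leq D X (rdx D g (rdx D (pair D (idn D Y) (idn D Y)) (\<delta> Y))) (rdx D g t)"
    using rdx_mono[OF g dl tin] by simp
  have "cmp D (pair D (idn D Y) (idn D Y)) g = pair D g g"
    using pair_comp[OF idn_hom idn_hom g] idl[OF g] by simp
  then have 2: "rdx D g (rdx D (pair D (idn D Y) (idn D Y)) (\<delta> Y)) = rdx D (pair D g g) (\<delta> Y)"
    using rdx_comp[OF g ii delta_in] by simp
  show ?thesis using 1 2 istop_pair[OF g] rdx_in[OF g tin] trans unfolding istop_def
    by (metis rdx_in[OF g dl])
qed

lemma tprime:
  assumes b: "\<beta> \<in> Pr D A" and v: "v \<in> hom D Z A" and w: "w \<in> hom D Z A"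
  shows "leq D Z (meetP D Z (rdx D v \<beta>) (rdx D (pair D v w) (\<delta> A))) (rdx D w \<beta>)"
proof -
  have th: "rdx D (pr2 D Z A) \<beta> \<in> Pr D (prd D Z A)" using rdx_in[OF pr2_hom b] .
  have "\<And>y. y \<in> hom D Z A \<Longrightarrow> rdx D (pair D (idn D Z) y) (rdx D (pr2 D Z A) \<beta>) = rdx D y \<beta>"
    using rdx_comp[OF pair_hom[OF idn_hom] pr2_hom b] pr2_pair[OF idn_hom] by metis
  then show ?thesis using transport[OF th idn_hom v w] v w by simp
qed

lemma dsym:
  assumes v: "v \<in> hom D Z A" and w: "w \<in> hom D Z A"
  shows "leq D Z (rdx D (pair D v w) (\<delta> A)) (rdx D (pair D w v) (\<delta> A))"
proof -
  define sw where "sw = pair D (pr2 D A A) (pr1 D A A)"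
  have swh: "sw \<in> hom D (prd D A A) (prd D A A)" unfolding sw_def using pr2_hom pr1_hom by (rule pair_hom)
  have th: "rdx D sw (\<delta> A) \<in> Pr D (prd D A A)" using rdx_in[OF swh delta_in] .
  have e: "\<And>x y. x \<in> hom D Z A \<Longrightarrow> y \<in> hom D Z A \<Longrightarrow> rdx D (pair D x y) (rdx D sw (\<delta> A)) = rdx D (pair D y x) (\<delta> A)"
  proof -
    fix x y assume x: "x \<in> hom D Z A" and y: "y \<in> hom D Z A"
    have "cmp D sw (pair D x y) = pair D y x"
      unfolding sw_def using pair_comp[OF pr2_hom pr1_hom pair_hom[OF x y]] pr1_pair[OF x y] pr2_pair[OF x y] by simp
    then show "rdx D (pair D x y) (rdx D sw (\<delta> A)) = rdx D (pair D y x) (\<delta> A)"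
      using rdx_comp[OF pair_hom[OF x y] swh delta_in] by simp
  qed
  have T: "leq D Z (meetP D Z (rdx D (pair D v v) (\<delta> A)) (rdx D (pair D v w) (\<delta> A))) (rdx D (pair D w v) (\<delta> A))"
    using transport[OF th v v w] e[OF v v] e[OF v w] by simp
  have i1: "rdx D (pair D v w) (\<delta> A) \<in> Pr D Z" using rdx_in[OF pair_hom[OF v w] delta_in] .
  have i2: "rdx D (pair D v v) (\<delta> A) \<in> Pr D Z" using rdx_in[OF pair_hom[OF v v] delta_in] .
  have i3: "rdx D (pair D w v) (\<delta> A) \<in> Pr D Z" using rdx_in[OF pair_hom[OF w v] delta_in] .
  have "leq D Z (rdx D (pair D v w) (\<delta> A)) (meetP D Z (rdx D (pair D v v) (\<delta> A)) (rdx D (pair D v w) (\<delta> A)))"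
    using meet_gr[OF i2 i1 i1 reflx[OF v i1] refl[OF i1]] .
  then show ?thesis using trans[OF i1 meet_in[OF i2 i1] i3] T by blast
qed

lemma cc_hom: "\<alpha> \<in> Pr D A \<Longrightarrow> cc A \<alpha> \<in> hom D (c_dom D (cc A \<alpha>)) A"
  using cocomp unfolding has_cocomp_def hom_def by blast
lemma cc_bot: "\<alpha> \<in> Pr D A \<Longrightarrow> rdx D (cc A \<alpha>) \<alpha> = botP D (c_dom D (cc A \<alpha>))"
  using cocomp unfolding has_cocomp_def by blast
lemma cc_univ: "\<alpha> \<in> Pr D A \<Longrightarrow> f \<in> hom D Y A \<Longrightarrow> rdx D f \<alpha> = botP D Y \<Longrightarrow>
    \<exists>g. g \<in> hom D Y (c_dom D (cc A \<alpha>)) \<and> cmp D (cc A \<alpha>) g = f"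
  using cocomp unfolding has_cocomp_def by blast
lemma fullD: "\<alpha> \<in> Pr D A \<Longrightarrow> \<beta> \<in> Pr D A \<Longrightarrow>
   g \<in> hom D (c_dom D (cc A \<beta>)) (c_dom D (cc A \<alpha>)) \<Longrightarrow> cmp D (cc A \<alpha>) g = cc A \<beta> \<Longrightarrow> leq D A \<alpha> \<beta>"
  using full unfolding cocomp_full_def by blast

lemma eq_bot: "x \<in> Pr D X \<Longrightarrow> leq D X x (botP D X) \<Longrightarrow> x = botP D X"
  using antisym bot_in bot_le by blast

lemma F:
  assumes a: "\<alpha> \<in> Pr D A" and p: "\<phi> \<in> Pr D A"
  shows "leq D A \<phi> \<alpha> \<longleftrightarrow> rdx D (cc A \<alpha>) \<phi> = botP D (c_dom D (cc A \<alpha>))"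
proof
  assume "leq D A \<phi> \<alpha>"
  then show "rdx D (cc A \<alpha>) \<phi> = botP D (c_dom D (cc A \<alpha>))"
    using rdx_mono[OF cc_hom[OF a] p a] cc_bot[OF a] eq_bot rdx_in[OF cc_hom[OF a] p] by metis
next
  assume "rdx D (cc A \<alpha>) \<phi> = botP D (c_dom D (cc A \<alpha>))"
  then obtain g where "g \<in> hom D (c_dom D (cc A \<alpha>)) (c_dom D (cc A \<phi>))" "cmp D (cc A \<phi>) g = cc A \<alpha>"
    using cc_univ[OF p cc_hom[OF a]] by blast
  then show "leq D A \<phi> \<alpha>" using fullD[OF p a] by blast
qed

lemma c_botA: "\<alpha> \<in> Pr D A \<Longrightarrow> rdx D (cc A \<alpha>) (botP D A) = botP D (c_dom D (cc A \<alpha>))"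
  using F bot_in bot_le by blast

lemma si_uniq:
  assumes si: "stable_initial D Ob" and s: "s \<in> hom D Y Ob"
    and h1: "h1 \<in> hom D Y X" and h2: "h2 \<in> hom D Y X"
  shows "h1 = h2"
proof -
  obtain f g where f: "f \<in> hom D (prd D Y Ob) Ob" and g: "g \<in> hom D Ob (prd D Y Ob)"
    and gf: "cmp D g f = idn D (prd D Y Ob)"
    using si unfolding stable_initial_def c_iso_def by blast
  have isp: "pair D (idn D Y) s \<in> hom D Y (prd D Y Ob)" using idn_hom s by (rule pair_hom)
  define u where "u = cmp D f (pair D (idn D Y) s)"
  define r where "r = cmp D (pr1 D Y Ob) g"
  have uh: "u \<in> hom D Y Ob" unfolding u_def using comp_hom[OF isp f] .
  have rh: "r \<in> hom D Ob Y" unfolding r_def using comp_hom[OF g pr1_hom] .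
  have "cmp D r u = cmp D (pr1 D Y Ob) (cmp D (cmp D g f) (pair D (idn D Y) s))"
    unfolding r_def u_def using c2[OF uh g pr1_hom] assoc[OF isp f g] by (simp add: u_def)
  also have "\<dots> = idn D Y" using gf idl[OF isp] pr1_pair[OF idn_hom s] by simp
  finally have ru: "cmp D r u = idn D Y" .
  have ci: "c_initial D Ob" using si unfolding stable_initial_def by blast
  have "cmp D h1 r = cmp D h2 r" using ci comp_hom[OF rh h1] comp_hom[OF rh h2] unfolding c_initial_def by blast
  then show ?thesis using idr[OF h1] idr[OF h2] ru c2[OF uh rh h1] c2[OF uh rh h2] by metis
qed

lemma si_all_eq:
  assumes si: "stable_initial D Ob" and b: "\<beta> \<in> Pr D Ob" and c: "\<gamma> \<in> Pr D Ob"
  shows "leq D Ob \<beta> \<gamma>"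
proof -
  obtain h where h: "h \<in> hom D Ob (c_dom D (cc Ob \<beta>))"
    using si unfolding stable_initial_def c_initial_def by blast
  have g: "cmp D h (cc Ob \<gamma>) \<in> hom D (c_dom D (cc Ob \<gamma>)) (c_dom D (cc Ob \<beta>))"
    using comp_hom[OF cc_hom[OF c] h] .
  have "cmp D (cc Ob \<beta>) (cmp D h (cc Ob \<gamma>)) = cc Ob \<gamma>"
    using si_uniq[OF si cc_hom[OF c] comp_hom[OF g cc_hom[OF b]] cc_hom[OF c]] .
  then show ?thesis using fullD[OF b c g] by blast
qed

lemma si_top:
  assumes a: "\<alpha> \<in> Pr D A" and si: "stable_initial D (c_dom D (cc A \<alpha>))" and b: "b \<in> Pr D A"
  shows "leq D A b \<alpha>"
proof -
  have "rdx D (cc A \<alpha>) b = botP D (c_dom D (cc A \<alpha>))"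
    using si_all_eq[OF si] rdx_in[OF cc_hom[OF a] b] bot_in antisym by blast
  then show ?thesis using F[OF a b] by blast
qed

lemma ACD:
  assumes "\<not> stable_initial D Ob" "\<psi> \<in> Pr D (prd D Ob A)"
  shows "eps2 Ob A \<psi> \<in> hom D A Ob \<and> (\<forall>\<phi>\<in>Pr D A.
     leq D A (rdx D (pair D (eps2 Ob A \<psi>) (idn D A)) \<psi>) \<phi> \<longleftrightarrow> leq D (prd D Ob A) \<psi> (rdx D (pr2 D Ob A) \<phi>))"
  using AC assms unfolding has_AC_def by blast

definition Gr where "Gr A \<alpha> = rdx D (pair D (cmp D (cc A \<alpha>) (pr1 D (c_dom D (cc A \<alpha>)) A))
    (pr2 D (c_dom D (cc A \<alpha>)) A)) (\<delta> A)"
definition NN where "NN A \<alpha> = rdx D (pair D (eps2 (c_dom D (cc A \<alpha>)) A (Gr A \<alpha>)) (idn D A)) (Gr A \<alpha>)"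

lemma Gr_in: "\<alpha> \<in> Pr D A \<Longrightarrow> Gr A \<alpha> \<in> Pr D (prd D (c_dom D (cc A \<alpha>)) A)"
  unfolding Gr_def by (rule rdx_in[OF pair_hom[OF comp_hom[OF pr1_hom cc_hom] pr2_hom] delta_in])

lemma NN_props:
  assumes a: "\<alpha> \<in> Pr D A" and ns: "\<not> stable_initial D (c_dom D (cc A \<alpha>))"
  shows "NN A \<alpha> \<in> Pr D A \<and> (\<forall>\<phi>\<in>Pr D A. leq D A (NN A \<alpha>) \<phi> \<longleftrightarrow>
            leq D (prd D (c_dom D (cc A \<alpha>)) A) (Gr A \<alpha>) (rdx D (pr2 D (c_dom D (cc A \<alpha>)) A) \<phi>))"
  using ACD[OF ns Gr_in[OF a]] rdx_in[OF pair_hom[OF _ idn_hom] Gr_in[OF a]] unfolding NN_def by blast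

lemma K:
  assumes a: "\<alpha> \<in> Pr D A" and ns: "\<not> stable_initial D (c_dom D (cc A \<alpha>))" and p: "\<phi> \<in> Pr D A"
  shows "leq D A (NN A \<alpha>) \<phi> \<longleftrightarrow> istop (c_dom D (cc A \<alpha>)) (rdx D (cc A \<alpha>) \<phi>)"
proof -
  define Ob where "Ob = c_dom D (cc A \<alpha>)"
  define c where "c = cc A \<alpha>"
  have ch: "c \<in> hom D Ob A" unfolding c_def Ob_def using cc_hom[OF a] .
  have p1: "pr1 D Ob A \<in> hom D (prd D Ob A) Ob" "pr2 D Ob A \<in> hom D (prd D Ob A) A" by (rule pr1_hom, rule pr2_hom)
  have w: "cmp D c (pr1 D Ob A) \<in> hom D (prd D Ob A) A" using comp_hom[OF p1(1) ch] .
  have G: "Gr A \<alpha> = rdx D (pair D (cmp D c (pr1 D Ob A)) (pr2 D Ob A)) (\<delta> A)"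
    unfolding Gr_def c_def Ob_def ..
  have Gin: "Gr A \<alpha> \<in> Pr D (prd D Ob A)" using Gr_in[OF a] unfolding Ob_def .
  have pin: "rdx D (pr2 D Ob A) \<phi> \<in> Pr D (prd D Ob A)" using rdx_in[OF p1(2) p] .
  have cp: "rdx D c \<phi> \<in> Pr D Ob" using rdx_in[OF ch p] .
  have "leq D (prd D Ob A) (Gr A \<alpha>) (rdx D (pr2 D Ob A) \<phi>) \<longleftrightarrow> istop Ob (rdx D c \<phi>)"
  proof
    assume L: "leq D (prd D Ob A) (Gr A \<alpha>) (rdx D (pr2 D Ob A) \<phi>)"
    define k where "k = pair D (idn D Ob) c"
    have kh: "k \<in> hom D Ob (prd D Ob A)" unfolding k_def using idn_hom ch by (rule pair_hom)
    have "cmp D (pair D (cmp D c (pr1 D Ob A)) (pr2 D Ob A)) k = pair D c c"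
      unfolding k_def using pair_comp[OF w p1(2) pair_hom[OF idn_hom ch]] c2[OF pair_hom[OF idn_hom ch] p1(1) ch]
        pr1_pair[OF idn_hom ch] pr2_pair[OF idn_hom ch] idr[OF ch] by simp
    then have 1: "rdx D k (Gr A \<alpha>) = rdx D (pair D c c) (\<delta> A)"
      using G rdx_comp[OF kh pair_hom[OF w p1(2)] delta_in] by simp
    have 2: "rdx D k (rdx D (pr2 D Ob A) \<phi>) = rdx D c \<phi>"
      using rdx_comp[OF kh p1(2) p] pr2_pair[OF idn_hom ch] unfolding k_def by simp
    have "leq D Ob (rdx D (pair D c c) (\<delta> A)) (rdx D c \<phi>)" using rdx_mono[OF kh Gin pin L] 1 2 by simp
    then show "istop Ob (rdx D c \<phi>)" using istop_pair[OF ch] cp trans unfolding istop_def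
      by (meson rdx_in pair_hom ch delta_in)
  next
    assume T: "istop Ob (rdx D c \<phi>)"
    have "istop (prd D Ob A) (rdx D (pr1 D Ob A) (rdx D c \<phi>))" using top_stable[OF T p1(1)] .
    then have T2: "istop (prd D Ob A) (rdx D (cmp D c (pr1 D Ob A)) \<phi>)" using rdx_comp[OF p1(1) ch p] by simp
    have tp: "leq D (prd D Ob A) (meetP D (prd D Ob A) (rdx D (cmp D c (pr1 D Ob A)) \<phi>) (Gr A \<alpha>)) (rdx D (pr2 D Ob A) \<phi>)"
      using tprime[OF p w p1(2)] G by simp
    have i1: "rdx D (cmp D c (pr1 D Ob A)) \<phi> \<in> Pr D (prd D Ob A)" using rdx_in[OF w p] .
    have "leq D (prd D Ob A) (Gr A \<alpha>) (meetP D (prd D Ob A) (rdx D (cmp D c (pr1 D Ob A)) \<phi>) (Gr A \<alpha>))"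
      using meet_gr[OF i1 Gin Gin] T2 Gin refl[OF Gin] unfolding istop_def by blast
    then show "leq D (prd D Ob A) (Gr A \<alpha>) (rdx D (pr2 D Ob A) \<phi>)"
      using trans[OF Gin meet_in[OF i1 Gin] pin] tp by blast
  qed
  then show ?thesis using NN_props[OF a ns] p unfolding Ob_def c_def by blast
qed

lemma D1:
  assumes a: "\<alpha> \<in> Pr D A" and ns: "\<not> stable_initial D (c_dom D (cc A \<alpha>))"
  shows "leq D A (meetP D A (NN A \<alpha>) \<alpha>) (botP D A)"
proof -
  define Ob where "Ob = c_dom D (cc A \<alpha>)"
  define c where "c = cc A \<alpha>"
  have ch: "c \<in> hom D Ob A" unfolding c_def Ob_def using cc_hom[OF a] .
  have p1: "pr1 D Ob A \<in> hom D (prd D Ob A) Ob" "pr2 D Ob A \<in> hom D (prd D Ob A) A" by (rule pr1_hom, rule pr2_hom)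
  define w where "w = cmp D c (pr1 D Ob A)"
  define v where "v = pr2 D Ob A"
  have wh: "w \<in> hom D (prd D Ob A) A" unfolding w_def using comp_hom[OF p1(1) ch] .
  have vh: "v \<in> hom D (prd D Ob A) A" unfolding v_def using p1(2) .
  have G: "Gr A \<alpha> = rdx D (pair D w v) (\<delta> A)"
    unfolding Gr_def c_def Ob_def w_def v_def ..
  have Gin: "Gr A \<alpha> \<in> Pr D (prd D Ob A)" using Gr_in[OF a] unfolding Ob_def .
  have va: "rdx D v \<alpha> \<in> Pr D (prd D Ob A)" using rdx_in[OF vh a] .
  define \<psi> where "\<psi> = meetP D (prd D Ob A) (Gr A \<alpha>) (rdx D v \<alpha>)"
  have psi: "\<psi> \<in> Pr D (prd D Ob A)" unfolding \<psi>_def using meet_in[OF Gin va] .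
  have vw: "rdx D (pair D v w) (\<delta> A) \<in> Pr D (prd D Ob A)" using rdx_in[OF pair_hom[OF vh wh] delta_in] .
  have wb: "rdx D w (botP D A) \<in> Pr D (prd D Ob A)" using rdx_in[OF wh bot_in] .
  have vb: "rdx D v (botP D A) \<in> Pr D (prd D Ob A)" using rdx_in[OF vh bot_in] .
  have wa: "rdx D w \<alpha> \<in> Pr D (prd D Ob A)" using rdx_in[OF wh a] .
  have psiG: "leq D (prd D Ob A) \<psi> (Gr A \<alpha>)" unfolding \<psi>_def using meet_le1[OF Gin va] .
  have psiv: "leq D (prd D Ob A) \<psi> (rdx D v \<alpha>)" unfolding \<psi>_def using meet_le2[OF Gin va] .
  have "leq D (prd D Ob A) \<psi> (rdx D (pair D v w) (\<delta> A))"
    using trans[OF psi Gin vw psiG] dsym[OF wh vh] G by simp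
  then have "leq D (prd D Ob A) \<psi> (meetP D (prd D Ob A) (rdx D v \<alpha>) (rdx D (pair D v w) (\<delta> A)))"
    using meet_gr[OF va vw psi psiv] by simp
  then have "leq D (prd D Ob A) \<psi> (rdx D w \<alpha>)"
    using trans[OF psi meet_in[OF va vw] wa] tprime[OF a vh wh] by blast
  moreover have "rdx D w \<alpha> = rdx D w (botP D A)"
    unfolding w_def using rdx_comp[OF p1(1) ch a] rdx_comp[OF p1(1) ch bot_in] cc_bot[OF a] c_botA[OF a]
    unfolding c_def Ob_def by simp
  ultimately have s1: "leq D (prd D Ob A) \<psi> (rdx D w (botP D A))" by simp
  have "leq D (prd D Ob A) \<psi> (meetP D (prd D Ob A) (rdx D w (botP D A)) (rdx D (pair D w v) (\<delta> A)))"
    using meet_gr[OF wb _ psi s1] psiG G Gin by simp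
  then have step1: "leq D (prd D Ob A) \<psi> (rdx D v (botP D A))"
    using trans[OF psi meet_in[OF wb] vb] tprime[OF bot_in wh vh] G Gin by metis
  define \<Sigma> where "\<Sigma> = rdx D (pair D (eps2 Ob A \<psi>) (idn D A)) \<psi>"
  have acp: "eps2 Ob A \<psi> \<in> hom D A Ob \<and> (\<forall>\<phi>\<in>Pr D A.
     leq D A \<Sigma> \<phi> \<longleftrightarrow> leq D (prd D Ob A) \<psi> (rdx D (pr2 D Ob A) \<phi>))"
    unfolding \<Sigma>_def using ACD[OF ns[folded Ob_def] psi] .
  have Sin: "\<Sigma> \<in> Pr D A" unfolding \<Sigma>_def using acp rdx_in[OF pair_hom[OF _ idn_hom] psi] by blast
  have step2: "leq D A \<Sigma> (botP D A)" using acp step1 bot_in unfolding v_def by blast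
  have unit: "leq D (prd D Ob A) \<psi> (rdx D v \<Sigma>)" using acp Sin refl[OF Sin] unfolding v_def by blast
  define j where "j = pair D (eps2 Ob A (Gr A \<alpha>)) (idn D A)"
  have eh: "eps2 Ob A (Gr A \<alpha>) \<in> hom D A Ob" using ACD[OF ns[folded Ob_def] Gin] by blast
  have jh: "j \<in> hom D A (prd D Ob A)" unfolding j_def using eh idn_hom by (rule pair_hom)
  have vj: "cmp D v j = idn D A" unfolding v_def j_def using pr2_pair[OF eh idn_hom] .
  have jv: "\<And>x. x \<in> Pr D A \<Longrightarrow> rdx D j (rdx D v x) = x"
    using rdx_comp[OF jh vh] vj rdx_id by metis
  have "rdx D j \<psi> = meetP D A (NN A \<alpha>) \<alpha>"
    unfolding \<psi>_def using rdx_meet[OF jh Gin va] jv[OF a]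
    unfolding NN_def j_def Ob_def by simp
  moreover have "leq D A (rdx D j \<psi>) \<Sigma>" using rdx_mono[OF jh psi rdx_in[OF vh Sin] unit] jv[OF Sin] by simp
  ultimately show ?thesis using trans[OF _ Sin bot_in _ step2] rdx_in[OF jh psi] by metis
qed

definition pc where "pc A \<alpha> = (if stable_initial D (c_dom D (cc A \<alpha>)) then botP D A else NN A \<alpha>)"

lemma pc_in: "\<alpha> \<in> Pr D A \<Longrightarrow> pc A \<alpha> \<in> Pr D A"
  unfolding pc_def using bot_in NN_props by auto

lemma CL:
  assumes a: "\<alpha> \<in> Pr D A" and b: "b \<in> Pr D A" and bp: "leq D A b (pc A \<alpha>)"
    and z: "z \<in> Pr D A" and zb: "leq D A z b" and za: "leq D A z \<alpha>"
  shows "leq D A z (botP D A)"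
proof (cases "stable_initial D (c_dom D (cc A \<alpha>))")
  case True
  then show ?thesis using bp trans[OF z b bot_in zb] unfolding pc_def by simp
next
  case False
  have N: "NN A \<alpha> \<in> Pr D A" using NN_props[OF a False] by blast
  have "leq D A z (NN A \<alpha>)" using trans[OF z b N zb] bp False unfolding pc_def by simp
  then have "leq D A z (meetP D A (NN A \<alpha>) \<alpha>)" using meet_gr[OF N a z] za by blast
  then show ?thesis using trans[OF z meet_in[OF N a] bot_in] D1[OF a False] by blast
qed

lemma PP:
  assumes a: "\<alpha> \<in> Pr D A"
  shows "leq D A (pc A (pc A \<alpha>)) \<alpha>"
proof (cases "stable_initial D (c_dom D (cc A \<alpha>))")
  case True
  show ?thesis using si_top[OF a True pc_in[OF pc_in[OF a]]] .
next
  case False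
  define c where "c = cc A \<alpha>"
  define Ob where "Ob = c_dom D (cc A \<alpha>)"
  have ch: "c \<in> hom D Ob A" unfolding c_def Ob_def using cc_hom[OF a] .
  have pa: "pc A \<alpha> \<in> Pr D A" using pc_in[OF a] .
  have q: "pc A (pc A \<alpha>) \<in> Pr D A" using pc_in[OF pa] .
  have T: "istop Ob (rdx D c (pc A \<alpha>))"
    using K[OF a False pa] refl[OF pa] False unfolding pc_def c_def Ob_def by simp
  have mi: "meetP D A (pc A (pc A \<alpha>)) (pc A \<alpha>) \<in> Pr D A" using meet_in[OF q pa] .
  have mb: "leq D A (meetP D A (pc A (pc A \<alpha>)) (pc A \<alpha>)) (botP D A)"
    using CL[OF pa q refl[OF q] mi meet_le1[OF q pa] meet_le2[OF q pa]] .
  have cq: "rdx D c (pc A (pc A \<alpha>)) \<in> Pr D Ob" using rdx_in[OF ch q] .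
  have cpa: "rdx D c (pc A \<alpha>) \<in> Pr D Ob" using rdx_in[OF ch pa] .
  have "leq D Ob (rdx D c (pc A (pc A \<alpha>))) (meetP D Ob (rdx D c (pc A (pc A \<alpha>))) (rdx D c (pc A \<alpha>)))"
    using meet_gr[OF cq cpa cq refl[OF cq]] T cq unfolding istop_def by blast
  also have "meetP D Ob (rdx D c (pc A (pc A \<alpha>))) (rdx D c (pc A \<alpha>)) = rdx D c (meetP D A (pc A (pc A \<alpha>)) (pc A \<alpha>))"
    using rdx_meet[OF ch q pa] by simp
  finally have 1: "leq D Ob (rdx D c (pc A (pc A \<alpha>))) (rdx D c (meetP D A (pc A (pc A \<alpha>)) (pc A \<alpha>)))" .
  have 2: "leq D Ob (rdx D c (meetP D A (pc A (pc A \<alpha>)) (pc A \<alpha>))) (botP D Ob)"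
    using rdx_mono[OF ch mi bot_in mb] c_botA[OF a] unfolding c_def Ob_def by simp
  have "rdx D c (pc A (pc A \<alpha>)) = botP D Ob"
    using eq_bot[OF cq] trans[OF cq rdx_in[OF ch mi] bot_in 1 2] by blast
  then show ?thesis using F[OF a q] unfolding c_def Ob_def by simp
qed

lemma CR:
  assumes a: "\<alpha> \<in> Pr D A" and b: "b \<in> Pr D A"
    and H: "\<forall>z\<in>Pr D A. leq D A z b \<longrightarrow> leq D A z \<alpha> \<longrightarrow> leq D A z (botP D A)"
  shows "leq D A b (pc A \<alpha>)"
proof -
  define \<gamma> where "\<gamma> = pc A \<alpha>"
  have g: "\<gamma> \<in> Pr D A" unfolding \<gamma>_def using pc_in[OF a] .
  show ?thesis
  proof (cases "stable_initial D (c_dom D (cc A \<gamma>))")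
    case True
    show ?thesis using si_top[OF g True b] unfolding \<gamma>_def .
  next
    case False
    define k where "k = cc A \<gamma>"
    define Ob where "Ob = c_dom D (cc A \<gamma>)"
    have kh: "k \<in> hom D Ob A" unfolding k_def Ob_def using cc_hom[OF g] .
    have "leq D A (NN A \<gamma>) \<alpha>" using PP[OF a] False unfolding \<gamma>_def pc_def by simp
    then have T: "istop Ob (rdx D k \<alpha>)" using K[OF g False a] unfolding k_def Ob_def by blast
    have mi: "meetP D A b \<alpha> \<in> Pr D A" using meet_in[OF b a] .
    have mb: "leq D A (meetP D A b \<alpha>) (botP D A)" using H mi meet_le1[OF b a] meet_le2[OF b a] by blast
    have kb: "rdx D k b \<in> Pr D Ob" using rdx_in[OF kh b] .
    have ka: "rdx D k \<alpha> \<in> Pr D Ob" using rdx_in[OF kh a] .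
    have "leq D Ob (rdx D k b) (meetP D Ob (rdx D k b) (rdx D k \<alpha>))"
      using meet_gr[OF kb ka kb refl[OF kb]] T kb unfolding istop_def by blast
    then have 1: "leq D Ob (rdx D k b) (rdx D k (meetP D A b \<alpha>))" using rdx_meet[OF kh b a] by simp
    have 2: "leq D Ob (rdx D k (meetP D A b \<alpha>)) (botP D Ob)"
      using rdx_mono[OF kh mi bot_in mb] c_botA[OF g] unfolding k_def Ob_def by simp
    have "rdx D k b = botP D Ob"
      using eq_bot[OF kb] trans[OF kb rdx_in[OF kh mi] bot_in 1 2] by blast
    then show ?thesis using F[OF g b] unfolding k_def Ob_def \<gamma>_def by simp
  qed
qed

end

lemma abstract:
  assumes po: "po_on S r"
    and bS: "b \<in> S" and bl: "\<forall>x\<in>S. r b x"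
    and mt: "\<forall>x\<in>S. \<forall>y\<in>S. \<exists>z. po_glb S r x y z"
    and pS: "\<forall>x\<in>S. p x \<in> S"
    and C: "\<forall>x\<in>S. \<forall>y\<in>S. r y (p x) \<longleftrightarrow> (\<forall>z\<in>S. r z y \<longrightarrow> r z x \<longrightarrow> r z b)"
    and PPa: "\<forall>x\<in>S. r (p (p x)) x"
  shows "heyting_algebra S (\<lambda>x y. r y x) \<and> has_finite_joins S r"
proof -
  have rf: "\<And>x. x \<in> S \<Longrightarrow> r x x" using po unfolding po_on_def by blast
  have asy: "\<And>x y. x \<in> S \<Longrightarrow> y \<in> S \<Longrightarrow> r x y \<Longrightarrow> r y x \<Longrightarrow> x = y" using po unfolding po_on_def by blast
  have tr: "\<And>x y z. x \<in> S \<Longrightarrow> y \<in> S \<Longrightarrow> z \<in> S \<Longrightarrow> r x y \<Longrightarrow> r y z \<Longrightarrow> r x z" using po unfolding po_on_def by blast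
  have pS': "\<And>x. x \<in> S \<Longrightarrow> p x \<in> S" using pS by blast
  have CI: "\<And>x y. x \<in> S \<Longrightarrow> y \<in> S \<Longrightarrow> (\<And>z. z \<in> S \<Longrightarrow> r z y \<Longrightarrow> r z x \<Longrightarrow> r z b) \<Longrightarrow> r y (p x)"
    using C by blast
  have CD: "\<And>x y z. x \<in> S \<Longrightarrow> y \<in> S \<Longrightarrow> r y (p x) \<Longrightarrow> z \<in> S \<Longrightarrow> r z y \<Longrightarrow> r z x \<Longrightarrow> r z b"
    using C by blast
  define m where "m x y = (SOME z. po_glb S r x y z)" for x y
  have mg: "\<And>x y. x \<in> S \<Longrightarrow> y \<in> S \<Longrightarrow> po_glb S r x y (m x y)"
    unfolding m_def using mt by (meson someI_ex)
  have mS: "\<And>x y. x \<in> S \<Longrightarrow> y \<in> S \<Longrightarrow> m x y \<in> S" using mg unfolding po_glb_def by blast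
  have m1: "\<And>x y. x \<in> S \<Longrightarrow> y \<in> S \<Longrightarrow> r (m x y) x" using mg unfolding po_glb_def by blast
  have m2: "\<And>x y. x \<in> S \<Longrightarrow> y \<in> S \<Longrightarrow> r (m x y) y" using mg unfolding po_glb_def by blast
  have m3: "\<And>x y w. x \<in> S \<Longrightarrow> y \<in> S \<Longrightarrow> w \<in> S \<Longrightarrow> r w x \<Longrightarrow> r w y \<Longrightarrow> r w (m x y)"
    using mg unfolding po_glb_def by blast
  have dj: "\<And>x z. x \<in> S \<Longrightarrow> z \<in> S \<Longrightarrow> r z (p x) \<Longrightarrow> r z x \<Longrightarrow> r z b"
    using CD rf by blast
  have pp: "\<And>x. x \<in> S \<Longrightarrow> p (p x) = x"
  proof -
    fix x assume x: "x \<in> S"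
    have "r x (p (p x))"
      by (rule CI[OF pS'[OF x] x]) (rule dj[OF x], auto)
    then show "p (p x) = x" using asy[OF pS'[OF pS'[OF x]] x] PPa x by blast
  qed
  have anti: "\<And>x w. x \<in> S \<Longrightarrow> w \<in> S \<Longrightarrow> r x w \<Longrightarrow> r (p w) (p x)"
  proof -
    fix x w assume x: "x \<in> S" and w: "w \<in> S" and xw: "r x w"
    show "r (p w) (p x)"
    proof (rule CI[OF x pS'[OF w]])
      fix z assume z: "z \<in> S" "r z (p w)" "r z x"
      show "r z b" using dj[OF w z(1) z(2) tr[OF z(1) x w z(3) xw]] .
    qed
  qed
  define J where "J x y = p (m (p x) (p y))" for x y
  have JS: "\<And>x y. x \<in> S \<Longrightarrow> y \<in> S \<Longrightarrow> J x y \<in> S" unfolding J_def using pS' mS by blast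
  have J1: "\<And>x y. x \<in> S \<Longrightarrow> y \<in> S \<Longrightarrow> r x (J x y)"
  proof -
    fix x y assume x: "x \<in> S" and y: "y \<in> S"
    have px: "p x \<in> S" and py: "p y \<in> S" using pS' x y by auto
    show "r x (J x y)" unfolding J_def
    proof (rule CI[OF mS[OF px py] x])
      fix z assume z: "z \<in> S" "r z x" "r z (m (p x) (p y))"
      show "r z b" using dj[OF x z(1) tr[OF z(1) mS[OF px py] px z(3) m1[OF px py]] z(2)] .
    qed
  qed
  have J2: "\<And>x y. x \<in> S \<Longrightarrow> y \<in> S \<Longrightarrow> r y (J x y)"
  proof -
    fix x y assume x: "x \<in> S" and y: "y \<in> S"
    have px: "p x \<in> S" and py: "p y \<in> S" using pS' x y by auto
    show "r y (J x y)" unfolding J_def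
    proof (rule CI[OF mS[OF px py] y])
      fix z assume z: "z \<in> S" "r z y" "r z (m (p x) (p y))"
      show "r z b" using dj[OF y z(1) tr[OF z(1) mS[OF px py] py z(3) m2[OF px py]] z(2)] .
    qed
  qed
  have J3: "\<And>x y w. x \<in> S \<Longrightarrow> y \<in> S \<Longrightarrow> w \<in> S \<Longrightarrow> r x w \<Longrightarrow> r y w \<Longrightarrow> r (J x y) w"
  proof -
    fix x y w assume x: "x \<in> S" and y: "y \<in> S" and w: "w \<in> S" and xw: "r x w" and yw: "r y w"
    have px: "p x \<in> S" and py: "p y \<in> S" and pw: "p w \<in> S" using pS' x y w by auto
    have "r (p w) (m (p x) (p y))" using m3[OF px py pw anti[OF x w xw] anti[OF y w yw]] .
    then have "r (p (m (p x) (p y))) (p (p w))" using anti[OF pw mS[OF px py]] by blast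
    then show "r (J x y) w" unfolding J_def using pp[OF w] by simp
  qed
  have lub: "\<And>x y. x \<in> S \<Longrightarrow> y \<in> S \<Longrightarrow> po_lub S r x y (J x y)"
    unfolding po_lub_def po_glb_def using JS J1 J2 J3 by blast
  have lubu: "\<And>x y M. x \<in> S \<Longrightarrow> y \<in> S \<Longrightarrow> po_lub S r x y M \<Longrightarrow> M = J x y"
  proof -
    fix x y M assume x: "x \<in> S" and y: "y \<in> S" and M: "po_lub S r x y M"
    have MS: "M \<in> S" "r x M" "r y M" "\<forall>w\<in>S. r x w \<and> r y w \<longrightarrow> r M w"
      using M unfolding po_lub_def po_glb_def by auto
    show "M = J x y" using asy[OF MS(1) JS[OF x y]] MS(4) JS[OF x y] J1[OF x y] J2[OF x y] J3[OF x y MS(1) MS(2,3)]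
      by blast
  qed
  have pbS: "p b \<in> S" using pS' bS by blast
  have topb: "\<forall>x\<in>S. r x (p b)" using CI[OF bS] by blast
  have imp: "\<forall>x\<in>S. \<forall>y\<in>S. \<exists>z\<in>S. \<forall>w\<in>S.
           (\<forall>M. po_glb S (\<lambda>x y. r y x) w x M \<longrightarrow> r y M) \<longleftrightarrow> r z w"
  proof (intro ballI)
    fix x y assume x: "x \<in> S" and y: "y \<in> S"
    have px: "p x \<in> S" using pS' x by blast
    show "\<exists>z\<in>S. \<forall>w\<in>S. (\<forall>M. po_glb S (\<lambda>x y. r y x) w x M \<longrightarrow> r y M) \<longleftrightarrow> r z w"
    proof (intro bexI ballI)
      show "m y (p x) \<in> S" using mS[OF y px] .
      fix w assume w: "w \<in> S"
      have pw: "p w \<in> S" using pS' w by blast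
      have gl: "\<And>M. po_glb S (\<lambda>x y. r y x) w x M \<longleftrightarrow> po_lub S r w x M" unfolding po_lub_def by simp
      have s1: "(\<forall>M. po_glb S (\<lambda>x y. r y x) w x M \<longrightarrow> r y M) \<longleftrightarrow> r y (J w x)"
      proof
        assume "\<forall>M. po_glb S (\<lambda>x y. r y x) w x M \<longrightarrow> r y M"
        then show "r y (J w x)" using gl lub[OF w x] by blast
      next
        assume "r y (J w x)"
        then show "\<forall>M. po_glb S (\<lambda>x y. r y x) w x M \<longrightarrow> r y M" using gl lubu[OF w x] by blast
      qed
      have mw: "m (p w) (p x) \<in> S" using mS[OF pw px] .
      have my: "m y (p x) \<in> S" using mS[OF y px] .
      have "r y (J w x) \<longleftrightarrow> r (m y (p x)) (p (p w))"
      proof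
        assume a: "r y (J w x)"
        show "r (m y (p x)) (p (p w))"
        proof (rule CI[OF pw my])
          fix z assume z: "z \<in> S" "r z (m y (p x))" "r z (p w)"
          have zy: "r z y" using tr[OF z(1) my y z(2) m1[OF y px]] .
          have zx: "r z (p x)" using tr[OF z(1) my px z(2) m2[OF y px]] .
          show "r z b" using CD[OF mw y a[unfolded J_def] z(1) zy m3[OF pw px z(1) z(3) zx]] .
        qed
      next
        assume a: "r (m y (p x)) (p (p w))"
        show "r y (J w x)" unfolding J_def
        proof (rule CI[OF mw y])
          fix z assume z: "z \<in> S" "r z y" "r z (m (p w) (p x))"
          have zw: "r z (p w)" using tr[OF z(1) mw pw z(3) m1[OF pw px]] .
          have zx: "r z (p x)" using tr[OF z(1) mw px z(3) m2[OF pw px]] .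
          show "r z b" using CD[OF pw my a z(1) m3[OF y px z(1) z(2) zx] zw] .
        qed
      qed
      then show "(\<forall>M. po_glb S (\<lambda>x y. r y x) w x M \<longrightarrow> r y M) \<longleftrightarrow> r (m y (p x)) w"
        using s1 pp[OF w] by simp
    qed
  qed
  have poop: "po_on S (\<lambda>x y. r y x)" using po unfolding po_on_def by blast
  have "heyting_algebra S (\<lambda>x y. r y x)"
    unfolding heyting_algebra_def
  proof (intro conjI)
    show "po_on S (\<lambda>x y. r y x)" using poop .
    show "\<exists>t. po_top S (\<lambda>x y. r y x) t" unfolding po_top_def using bS bl by blast
    show "\<exists>t. po_bot S (\<lambda>x y. r y x) t" unfolding po_bot_def using pbS topb by blast
    show "\<forall>x\<in>S. \<forall>y\<in>S. \<exists>z. po_glb S (\<lambda>x y. r y x) x y z"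
      using lub unfolding po_lub_def by blast
    have "\<And>x y z. po_lub S (\<lambda>x y. r y x) x y z = po_glb S r x y z" unfolding po_lub_def by simp
    then show "\<forall>x\<in>S. \<forall>y\<in>S. \<exists>z. po_lub S (\<lambda>x y. r y x) x y z"
      using mg by metis
    show "\<forall>x\<in>S. \<forall>y\<in>S. \<exists>z\<in>S. \<forall>w\<in>S. (\<forall>m. po_glb S (\<lambda>x y. r y x) w x m \<longrightarrow> r y m) \<longleftrightarrow> r z w"
      using imp .
  qed
  moreover have "has_finite_joins S r"
    unfolding has_finite_joins_def po_bot_def using bS bl lub by blast
  ultimately show ?thesis ..
qed

theorem mainTheorem15:
  fixes D :: "('o, 'm, 'p) doctrine"
    and \<delta> :: "'o \<Rightarrow> 'p" and cc :: "'o \<Rightarrow> 'p \<Rightarrow> 'm"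
    and eps1 eps2 :: "'o \<Rightarrow> 'o \<Rightarrow> 'p \<Rightarrow> 'm"
  assumes "is_heaco D \<delta> cc eps1 eps2"
  shows "\<forall>A. heyting_algebra (Pr D A) (\<lambda>x y. leq D A y x)
             \<and> has_finite_joins (Pr D A) (leq D A)"
proof
  fix A
  interpret hctx D \<delta> cc eps1 eps2 using assms by unfold_locales
  show "heyting_algebra (Pr D A) (\<lambda>x y. leq D A y x) \<and> has_finite_joins (Pr D A) (leq D A)"
  proof (rule abstract[where b = "botP D A" and p = "pc A"])
    show "po_on (Pr D A) (leq D A)" using po .
    show "botP D A \<in> Pr D A" using bot_in .
    show "\<forall>x\<in>Pr D A. leq D A (botP D A) x" using bot_le by blast
    show "\<forall>x\<in>Pr D A. \<forall>y\<in>Pr D A. \<exists>z. po_glb (Pr D A) (leq D A) x y z" using glb_ex by blast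
    show "\<forall>x\<in>Pr D A. pc A x \<in> Pr D A" using pc_in by blast
    show "\<forall>x\<in>Pr D A. \<forall>y\<in>Pr D A. leq D A y (pc A x) \<longleftrightarrow>
        (\<forall>z\<in>Pr D A. leq D A z y \<longrightarrow> leq D A z x \<longrightarrow> leq D A z (botP D A))"
      using CL CR by blast
    show "\<forall>x\<in>Pr D A. leq D A (pc A (pc A x)) x" using PP by blast
  qed
qed

end
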